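(* Let $\mathbf{V}\in\mathbb{R}^{N\times N}$ with $\mathbf{V}\boldsymbol\mu=\boldsymbol\mu$ and $\mathbf{A}\in\mathbb{R}^{T\times N}$ with $\mathbf{1}_T^\top\mathbf{A}=\mathbf{1}_N^\top$. Then $$\mathbb{E}\nabla_{\mathbf{V}}l=\|\mathbf{A}\|_\mu^2\mathbf{V}\operatorname{diag}(\boldsymbol\mu)+(1-\|\mathbf{A}\|_\mu^2)\boldsymbol\mu\boldsymbol\mu^\top-\langle\mathbf{Q},\mathbf{A}\rangle_\mu\mathbf{P}\operatorname{diag}(\boldsymbol\mu)-(1-\langle\mathbf{Q},\mathbf{A}\rangle_\mu)\boldsymbol\mu\boldsymbol\mu^\top,$$ and for every $k\in[N]$, $$\mathbb{E}\nabla_{\mathbf{a}^{(k)}}l=\mu_k(\|\mathbf{V}\|_\mu^2-\|\boldsymbol\mu\|^2)\mathbf{a}^{(k)}+\mu_k\|\boldsymbol\mu\|^2\mathbf{1}-\mu_k\langle\mathbf{V},\mathbf{P}\rangle_\mu\mathbf{q}^{(k)}-\mu_k\|\boldsymbol\mu\|^2(\mathbf{1}-\mathbf{q}^{(k)}).$$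
   Context: Let $\mathbf{P}\in\mathbb{R}^{N\times N}$ have nonnegative entries with columns summing to $1$, and let $\boldsymbol\mu\in\mathbb{R}^N$ be a probability vector with $\mathbf{P}\boldsymbol\mu=\boldsymbol\mu$. Let $\mathbf{Q}=(\mathbf{q}^{(1)},\dots,\mathbf{q}^{(N)})\in\mathbb{R}^{T\times N}$ with each $\mathbf{q}^{(k)}$ a probability vector. Data: $x_1,\dots,x_{T+1}$ i.i.d. with law $\boldsymbol\mu$ on $[N]$, and $x_o\in[N]$ with $\Pr(x_o=n\mid x_{T+1}=k,x_1,\dots,x_T)=\sum_tq^{(k)}_tP_{n,x_t}$; $\mathbf{X}=(\mathbf{e}_{x_1},\dots,\mathbf{e}_{x_T})\in\mathbb{R}^{N\times T}$. The loss is $l=\frac12\|\mathbf{e}_{x_o}-\mathbf{V}\mathbf{X}\mathbf{A}\mathbf{e}_{x_{T+1}}\|^2$, with $\mathbf{a}^{(k)}$ the $k$-th column of $\mathbf{A}$; $\nabla_{\mathbf{V}}l$ and $\nabla_{\mathbf{a}^{(k)}}l$ are its gradients, and $\mathbb{E}$ is expectation over $(x_1,\dots,x_{T+1},x_o)$ with $\mathbf{V},\mathbf{A}$ fixed. For matrices $\mathbf{M},\mathbf{M}'$ with $N$ columns, $\langle\mathbf{M},\mathbf{M}'\rangle_\mu=\operatorname{Tr}(\mathbf{M}\operatorname{diag}(\boldsymbol\mu)\mathbf{M}'^\top)$ and $\|\mathbf{M}\|_\mu^2=\langle\mathbf{M},\mathbf{M}\rangle_\mu$; $\|\boldsymbol\mu\|$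 is Euclidean; $\mathbf{1}$ is the all-ones vector in $\mathbb{R}^T$. *)

theory Defs
  imports "HOL-Analysis.Analysis"
begin

text \<open>Tokens [N] are the finite type 'n, positions [T] the finite type 't.
  Vectors in R^N are real^'n; an R^{a x b} matrix is real^'b^'a (rows first).\<close>

definition diagv :: "real^'n \<Rightarrow> real^'n^'n" where
  "diagv v = (\<chi> i j. if i = j then v $ i else 0)"

definition outerv :: "real^'n \<Rightarrow> real^'m \<Rightarrow> real^'m^'n" where
  "outerv u v = (\<chi> i j. u $ i * v $ j)"

definition muinner :: "real^'n \<Rightarrow> real^'n^'r \<Rightarrow> real^'n^'r \<Rightarrow> real" where
  "muinner mu M M' = trace (M ** diagv mu ** transpose M')"

definition grad :: "('a::real_inner \<Rightarrow> real) \<Rightarrow> 'a \<Rightarrow> 'a" where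
  "grad f x = (THE D. GDERIV f x :> D)"

definition datamat :: "('t::finite \<Rightarrow> 'n::finite) \<Rightarrow> real^'t^'n" where
  "datamat xs = (\<chi> i t. if xs t = i then 1 else 0)"

text \<open>Loss l = 1/2 || e_{x_o} - V X A e_{x_{T+1}} ||^2 with x_{T+1} = k.\<close>
definition loss :: "real^'n^'n \<Rightarrow> real^'n^'t \<Rightarrow> ('t::finite \<Rightarrow> 'n::finite) \<Rightarrow> 'n \<Rightarrow> 'n \<Rightarrow> real" where
  "loss V A xs k xo = (1/2) * (norm (axis xo 1 - (V ** datamat xs ** A) *v axis k 1))^2"

definition setcol :: "'n \<Rightarrow> real^'t \<Rightarrow> real^'n^'t \<Rightarrow> real^'n^'t" where
  "setcol k a A = (\<chi> t j. if j = k then a $ t else A $ t $ j)"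

text \<open>Joint probability of (x_1..x_T, x_{T+1} = k, x_o).\<close>
definition sample_prob :: "real^'n \<Rightarrow> real^'n^'n \<Rightarrow> real^'n^'t \<Rightarrow> ('t::finite \<Rightarrow> 'n::finite) \<Rightarrow> 'n \<Rightarrow> 'n \<Rightarrow> real" where
  "sample_prob mu P Q xs k xo =
     (\<Prod>t\<in>UNIV. mu $ xs t) * mu $ k * (\<Sum>t\<in>UNIV. Q $ t $ k * P $ xo $ xs t)"

definition expect :: "real^'n \<Rightarrow> real^'n^'n \<Rightarrow> real^'n^'t
     \<Rightarrow> (('t::finite \<Rightarrow> 'n::finite) \<Rightarrow> 'n \<Rightarrow> 'n \<Rightarrow> 'b::real_vector) \<Rightarrow> 'b" where
  "expect mu P Q f = (\<Sum>xs\<in>UNIV. \<Sum>k\<in>UNIV. \<Sum>xo\<in>UNIV. sample_prob mu P Q xs k xo *\<^sub>R f xs k xo)"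

end

theory Submission
  imports Defs "HOL-Library.FuncSet"
begin


lemma grad_quad:
  fixes L :: "'a::euclidean_space \<Rightarrow> 'b::real_inner"
  assumes lin: "linear L" and D: "\<And>h. inner (L h) (L x - c) = inner h D"
  shows "grad (\<lambda>y. (1/2) * (norm (c - L y))^2) x = D"
proof -
  have bl: "bounded_linear L" using lin by (simp add: linear_conv_bounded_linear)
  have eq: "(\<lambda>y. (1/2) * (norm (c - L y))^2) = (\<lambda>y. (1/2) * inner (c - L y) (c - L y))"
    by (simp add: power2_norm_eq_inner)
  have "((\<lambda>y. (1/2) * inner (c - L y) (c - L y)) has_derivative
        (\<lambda>h. (1/2) * (inner (c - L y0) (- L h) + inner (- L h) (c - L y0)))) (at y0)" for y0
  proof -
    have dL: "(L has_derivative L) (at y0)" using bl by (rule bounded_linear_imp_has_derivative)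
    show ?thesis
      by (rule derivative_eq_intros dL refl)+ (auto simp: algebra_simps fun_eq_iff inner_commute)
  qed
  then have "((\<lambda>y. (1/2) * inner (c - L y) (c - L y)) has_derivative (\<lambda>h. inner h D)) (at x)"
    apply (rule has_derivative_eq_rhs)
    using D by (auto simp: fun_eq_iff inner_commute algebra_simps inner_diff_right inner_diff_left)
  then have G: "GDERIV (\<lambda>y. (1/2) * (norm (c - L y))^2) x :> D"
    unfolding gderiv_def eq .
  have U: "D' = D" if "GDERIV (\<lambda>y. (1/2) * (norm (c - L y))^2) x :> D'" for D'
  proof -
    have "(\<lambda>h. inner h D') = (\<lambda>h. inner h D)"
      using has_derivative_unique that G unfolding gderiv_def by blast
    then have "inner (D' - D) D' = inner (D' - D) D" by metis
    then have "inner (D' - D) (D' - D) = 0" by (simp add: inner_diff_right)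
    then show ?thesis by simp
  qed
  show ?thesis unfolding grad_def using G U by (rule the_equality)
qed

lemma sum_prod_fun:
  fixes w :: "'t::finite \<Rightarrow> 'n::finite \<Rightarrow> real"
  shows "(\<Sum>xs\<in>UNIV. \<Prod>t\<in>UNIV. w t (xs t)) = (\<Prod>t\<in>UNIV. \<Sum>i\<in>UNIV. w t i)"
  using prod_sum_PiE[of "UNIV::'t set" "\<lambda>_. UNIV::'n set" w] by simp

lemma E0:
  fixes m :: "'n::finite \<Rightarrow> real"
  assumes "(\<Sum>i\<in>UNIV. m i) = 1"
  shows "(\<Sum>xs\<in>UNIV. \<Prod>t\<in>(UNIV::'t::finite set). m (xs t)) = 1"
  using sum_prod_fun[of "\<lambda>t i. m i"] assms by simp

lemma E2:
  fixes m :: "'n::finite \<Rightarrow> real" and t s :: "'t::finite"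
  assumes "(\<Sum>i\<in>UNIV. m i) = 1"
  shows "(\<Sum>xs\<in>UNIV. (\<Prod>t\<in>UNIV. m (xs t)) * (f (xs t) * g (xs s))) =
    (if t = s then (\<Sum>i\<in>UNIV. m i * (f i * g i)) else (\<Sum>i\<in>UNIV. m i * f i) * (\<Sum>i\<in>UNIV. m i * g i))"
proof (cases "t = s")
  case True
  define w where "w t' i = m i * (if t' = t then f i * g i else 1)" for t' i
  have "(\<Prod>t\<in>UNIV. m (xs t)) * (f (xs t) * g (xs s)) = (\<Prod>t'\<in>UNIV. w t' (xs t'))" for xs
    unfolding w_def prod.distrib using True by (simp add: prod.delta)
  then have "(\<Sum>xs\<in>UNIV. (\<Prod>t\<in>UNIV. m (xs t)) * (f (xs t) * g (xs s))) = (\<Prod>t'\<in>UNIV. \<Sum>i\<in>UNIV. w t' i)"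
    by (simp add: sum_prod_fun)
  also have "\<dots> = (\<Prod>t'\<in>UNIV. if t' = t then (\<Sum>i\<in>UNIV. m i * (f i * g i)) else 1)"
    unfolding w_def using assms by (intro prod.cong) auto
  finally show ?thesis using True by (simp add: prod.delta)
next
  case False
  define w where "w t' i = m i * (if t' = t then f i else if t' = s then g i else 1)" for t' i
  have "(\<Prod>t\<in>UNIV. m (xs t)) * (f (xs t) * g (xs s)) = (\<Prod>t'\<in>UNIV. w t' (xs t'))" for xs
  proof -
    have "(\<Prod>t'\<in>UNIV. (if t' = t then f (xs t') else if t' = s then g (xs t') else 1))
       = (\<Prod>t'\<in>UNIV. (if t' = t then f (xs t') else 1) * (if t' = s then g (xs t') else 1))"
      using False by (intro prod.cong) auto
    also have "\<dots> = f (xs t) * g (xs s)" by (simp add: prod.distrib prod.delta)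
    finally show ?thesis unfolding w_def prod.distrib by simp
  qed
  then have "(\<Sum>xs\<in>UNIV. (\<Prod>t\<in>UNIV. m (xs t)) * (f (xs t) * g (xs s))) = (\<Prod>t'\<in>UNIV. \<Sum>i\<in>UNIV. w t' i)"
    by (simp add: sum_prod_fun)
  also have "\<dots> = (\<Prod>t'\<in>UNIV. (if t' = t then (\<Sum>i\<in>UNIV. m i * f i) else 1) * (if t' = s then (\<Sum>i\<in>UNIV. m i * g i) else 1))"
    unfolding w_def using assms False by (intro prod.cong) auto
  finally show ?thesis using False by (simp add: prod.distrib prod.delta)
qed



lemma muinner_eq: "muinner mu M M' = (\<Sum>r\<in>UNIV. \<Sum>i\<in>UNIV. M$r$i * mu$i * M'$r$i)"
  unfolding muinner_def trace_def
  by (simp add: matrix_matrix_mult_def diagv_def transpose_def if_distrib if_distribR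
      sum.delta' cong: if_cong)

lemma datamat_mv: "(datamat xs *v a) $ i = (\<Sum>t\<in>UNIV. if xs t = i then a $ t else 0)"
  by (simp add: datamat_def matrix_vector_mult_def if_distrib if_distribR cong: if_cong)

lemma V_datamat_mv: "(V *v (datamat xs *v a)) $ n = (\<Sum>t\<in>UNIV. V $ n $ xs t * a $ t)"
proof -
  have "(V *v (datamat xs *v a)) $ n = (\<Sum>i\<in>UNIV. V$n$i * (\<Sum>t\<in>UNIV. if xs t = i then a $ t else 0))"
    by (subst matrix_vector_mult_def) (simp add: datamat_mv)
  also have "\<dots> = (\<Sum>i\<in>UNIV. \<Sum>t\<in>UNIV. if xs t = i then V$n$i * a $ t else 0)"
    by (simp add: sum_distrib_left if_distrib if_distribR cong: if_cong)
  also have "\<dots> = (\<Sum>t\<in>UNIV. \<Sum>i\<in>UNIV. if xs t = i then V$n$i * a $ t else 0)"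
    by (rule sum.swap)
  also have "\<dots> = (\<Sum>t\<in>UNIV. V $ n $ xs t * a $ t)"
    by (simp add: sum.delta)
  finally show ?thesis .
qed

lemma datamatT_mv: "(transpose (datamat xs) *v y) $ t = y $ xs t"
  by (simp add: datamat_def transpose_def matrix_vector_mult_def if_distrib if_distribR cong: if_cong)

lemma linear_mv_left: "linear (\<lambda>W::real^'n^'m. W *v z)"
  by (rule linearI) (simp_all add: matrix_vector_mult_add_rdistrib scaleR_matrix_vector_assoc)

lemma gradV:
  fixes V :: "real^'n::finite^'n" and A :: "real^'n^'t::finite"
  shows "grad (\<lambda>W. loss W A xs k xo) V =
    outerv (V *v (datamat xs *v column k A) - axis xo 1) (datamat xs *v column k A)"
proof -
  define z where "z = datamat xs *v column k A"
  have f: "(\<lambda>W. loss W A xs k xo) = (\<lambda>W. (1/2) * (norm (axis xo 1 - W *v z))^2)"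
    by (simp add: loss_def fun_eq_iff z_def del: matrix_vector_mult_basis add: matrix_vector_mul_assoc[symmetric] matrix_vector_mult_basis[symmetric])
  have "grad (\<lambda>W. (1/2) * (norm (axis xo 1 - W *v z))^2) V = outerv (V *v z - axis xo 1) z"
  proof (rule grad_quad[OF linear_mv_left])
    fix H :: "real^'n^'n"
    show "inner (H *v z) (V *v z - axis xo 1) = inner H (outerv (V *v z - axis xo 1) z)"
      by (simp add: inner_vec_def matrix_vector_mult_def outerv_def sum_distrib_right mult_ac)
  qed
  then show ?thesis using f z_def by simp
qed

lemma column_setcol: "column x (setcol k a A) = (if x = k then a else column x A)"
  by (simp add: column_def setcol_def vec_eq_iff)

lemma inner_mv_transpose: "inner (M *v (h::real^'a::finite)) (r::real^'b::finite) = inner h (transpose M *v r)"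
  by (metis dot_lmul_matrix inner_commute vector_transpose_matrix transpose_transpose)

lemma setcol_axis: "setcol k a A *v axis x 1 = (if x = k then a else A *v axis x 1)"
  by (simp add: matrix_vector_mult_basis column_setcol)

lemma gradA:
  fixes V :: "real^'n::finite^'n" and A :: "real^'n^'t::finite"
  shows "grad (\<lambda>a. loss V (setcol k a A) xs x xo) (column k A) =
    (if x = k then transpose (datamat xs) *v (transpose V *v (V *v (datamat xs *v column k A) - axis xo 1)) else 0)"
proof (cases "x = k")
  case True
  define X where "X = datamat xs"
  have f: "(\<lambda>a. loss V (setcol k a A) xs x xo) = (\<lambda>a. (1/2) * (norm (axis xo 1 - V *v (X *v a)))^2)"
    using True by (simp add: loss_def fun_eq_iff X_def matrix_vector_mult_basis[symmetric] setcol_axis del: matrix_vector_mult_basis add: matrix_vector_mul_assoc[symmetric])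
  have lin: "linear (\<lambda>a. V *v (X *v a))"
    by (simp add: matrix_vector_mul_assoc)
  have "grad (\<lambda>a. (1/2) * (norm (axis xo 1 - V *v (X *v a)))^2) (column k A) =
      transpose X *v (transpose V *v (V *v (X *v column k A) - axis xo 1))"
  proof (rule grad_quad[OF lin])
    fix h :: "real^'t"
    show "inner (V *v (X *v h)) (V *v (X *v column k A) - axis xo 1) =
          inner h (transpose X *v (transpose V *v (V *v (X *v column k A) - axis xo 1)))"
      by (simp add: inner_mv_transpose)
  qed
  then show ?thesis using f True X_def by simp
next
  case False
  define c where "c = axis xo 1 - V *v (datamat xs *v column x A)"
  have f: "(\<lambda>a. loss V (setcol k a A) xs x xo) = (\<lambda>a. (1/2) * (norm (c - (\<lambda>_. 0::real^'n) a))^2)"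
    using False by (simp add: loss_def fun_eq_iff c_def matrix_vector_mult_basis[symmetric] setcol_axis del: matrix_vector_mult_basis add: matrix_vector_mul_assoc[symmetric])
  have "grad (\<lambda>a::real^'t. (1/2) * (norm (c - (\<lambda>_. 0::real^'n) a))^2) (column k A) = 0"
    by (rule grad_quad) (simp_all add: linear_zero)
  then show ?thesis using f False by simp
qed



definition EE :: "real^'n \<Rightarrow> (('t::finite \<Rightarrow> 'n::finite) \<Rightarrow> real) \<Rightarrow> real" where
  "EE mu F = (\<Sum>xs\<in>UNIV. (\<Prod>t\<in>UNIV. mu $ xs t) * F xs)"

lemma EE_sum: "EE mu (\<lambda>xs. \<Sum>a\<in>S. F a xs) = (\<Sum>a\<in>S. EE mu (F a))"
  unfolding EE_def by (simp add: sum_distrib_left sum.swap[of _ S])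

lemma EE_cmult: "EE mu (\<lambda>xs. c * F xs) = c * EE mu F"
  unfolding EE_def by (simp add: sum_distrib_left mult_ac)

lemma EE_diff: "EE mu (\<lambda>xs. F xs - G xs) = EE mu F - EE mu G"
  unfolding EE_def by (simp add: sum_subtractf right_diff_distrib)

lemma EE_pair:
  assumes "(\<Sum>i\<in>UNIV. mu $ i) = 1"
  shows "EE mu (\<lambda>xs. f (xs t) * g (xs s)) =
    (if t = s then (\<Sum>i\<in>UNIV. mu $ i * (f i * g i)) else (\<Sum>i\<in>UNIV. mu $ i * f i) * (\<Sum>i\<in>UNIV. mu $ i * g i))"
  unfolding EE_def using E2[of "\<lambda>i. mu $ i" f t g s] assms by simp

lemma diag_split:
  fixes c d :: "'t::finite \<Rightarrow> real"
  shows "(\<Sum>t\<in>UNIV. \<Sum>s\<in>UNIV. c t * d s * (if t = s then X else Y)) =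
    (\<Sum>t\<in>UNIV. c t * d t) * X + ((\<Sum>t\<in>UNIV. c t) * (\<Sum>t\<in>UNIV. d t) - (\<Sum>t\<in>UNIV. c t * d t)) * Y"
proof -
  have "(\<Sum>t\<in>UNIV. \<Sum>s\<in>UNIV. c t * d s * (if t = s then X else Y)) =
     (\<Sum>t\<in>UNIV. \<Sum>s\<in>UNIV. c t * d s * Y + (if t = s then c t * d s * (X - Y) else 0))"
    by (intro sum.cong refl) (auto simp: algebra_simps)
  also have "\<dots> = (\<Sum>t\<in>UNIV. c t * (\<Sum>s\<in>UNIV. d s) * Y + c t * d t * (X - Y))"
    by (simp add: sum.distrib sum_distrib_left sum_distrib_right mult_ac)
  also have "\<dots> = (\<Sum>t\<in>UNIV. c t) * (\<Sum>s\<in>UNIV. d s) * Y + (\<Sum>t\<in>UNIV. c t * d t) * (X - Y)"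
    by (simp add: sum.distrib sum_distrib_right)
  finally show ?thesis by (simp add: algebra_simps)
qed

lemma single_split:
  fixes a :: "'t::finite \<Rightarrow> real"
  shows "(\<Sum>s\<in>UNIV. a s * (if t0 = s then X else Y)) = a t0 * X + ((\<Sum>s\<in>UNIV. a s) - a t0) * Y"
proof -
  have "(\<Sum>s\<in>UNIV. a s * (if t0 = s then X else Y)) = (\<Sum>s\<in>UNIV. a s * Y + (if t0 = s then a s * (X - Y) else 0))"
    by (intro sum.cong refl) (auto simp: algebra_simps)
  also have "\<dots> = (\<Sum>s\<in>UNIV. a s) * Y + a t0 * (X - Y)"
    by (simp add: sum.distrib sum_distrib_right)
  finally show ?thesis by (simp add: algebra_simps)
qed



lemma mv_fix: "M *v (mu::real^'n::finite) = mu \<Longrightarrow> (\<Sum>i\<in>UNIV. mu $ i * M $ n $ i) = mu $ n"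
proof -
  assume "M *v mu = mu"
  then have "(M *v mu) $ n = mu $ n" by simp
  then have "(\<Sum>i\<in>UNIV. M $ n $ i * mu $ i) = mu $ n" by (simp add: matrix_vector_mult_def)
  then show ?thesis by (metis (no_types, lifting) mult.commute sum.cong)
qed

lemma ind_sum: "(\<Sum>i\<in>UNIV. mu $ i * (f i * (if i = j then 1 else (0::real)))) = mu $ j * f j"
  by (simp add: if_distrib if_distribR cong: if_cong)

lemma ind_sum1: "(\<Sum>i\<in>UNIV. mu $ i * (if i = j then 1 else (0::real))) = mu $ j"
  by (simp add: if_distrib if_distribR cong: if_cong)

lemma z_comp: "(datamat xs *v column k A) $ j = (\<Sum>s\<in>UNIV. A $ s $ k * (if xs s = j then 1 else 0))"
  by (simp add: datamat_mv column_def if_distrib if_distribR cong: if_cong)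

lemma Vz_comp: "(V *v (datamat xs *v column k A)) $ n = (\<Sum>t\<in>UNIV. V $ n $ xs t * A $ t $ k)"
  by (simp add: V_datamat_mv column_def)

lemma Texp1:
  fixes V :: "real^'n::finite^'n" and A :: "real^'n^'t::finite"
  assumes mu_sum: "(\<Sum>i\<in>UNIV. mu $ i) = 1" and V_mu: "V *v mu = mu"
  shows "EE mu (\<lambda>xs::'t\<Rightarrow>'n. (V *v (datamat xs *v column k A)) $ n * (datamat xs *v column k A) $ j)
    = (\<Sum>t\<in>UNIV. \<Sum>s\<in>UNIV. A $ t $ k * A $ s $ k * (if t = s then V $ n $ j * mu $ j else mu $ n * mu $ j))"
proof -
  have "EE mu (\<lambda>xs::'t\<Rightarrow>'n. (V *v (datamat xs *v column k A)) $ n * (datamat xs *v column k A) $ j)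
     = EE mu (\<lambda>xs. \<Sum>t\<in>UNIV. \<Sum>s\<in>UNIV. (A $ t $ k * A $ s $ k) * (V $ n $ xs t * (if xs s = j then 1 else 0)))"
    unfolding z_comp Vz_comp by (subst sum.swap) (simp add: sum_distrib_left sum_distrib_right mult_ac)
  also have "\<dots> = (\<Sum>t\<in>UNIV. \<Sum>s\<in>UNIV. (A $ t $ k * A $ s $ k) * EE mu (\<lambda>xs. V $ n $ xs t * (if xs s = j then 1 else 0)))"
    by (simp add: EE_sum EE_cmult)
  also have "\<dots> = (\<Sum>t\<in>UNIV. \<Sum>s\<in>UNIV. A $ t $ k * A $ s $ k * (if t = s then V $ n $ j * mu $ j else mu $ n * mu $ j))"
  proof -
    have pe: "EE mu (\<lambda>xs::'t\<Rightarrow>'n. V $ n $ xs t * (if xs s = j then 1 else 0)) =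
      (if t = s then V $ n $ j * mu $ j else mu $ n * mu $ j)" for t s
      using EE_pair[OF mu_sum, of "\<lambda>i. V $ n $ i" t "\<lambda>i. if i = j then 1 else 0" s]
      by (simp add: ind_sum ind_sum1 mv_fix[OF V_mu] mult_ac)
    show ?thesis by (simp only: pe)
  qed
  finally show ?thesis .
qed

lemma Texp2:
  fixes P :: "real^'n::finite^'n" and A Q :: "real^'n^'t::finite"
  assumes mu_sum: "(\<Sum>i\<in>UNIV. mu $ i) = 1" and P_mu: "P *v mu = mu"
  shows "EE mu (\<lambda>xs::'t\<Rightarrow>'n. (\<Sum>t\<in>UNIV. Q $ t $ k * P $ n $ xs t) * (datamat xs *v column k A) $ j)
    = (\<Sum>t\<in>UNIV. \<Sum>s\<in>UNIV. Q $ t $ k * A $ s $ k * (if t = s then P $ n $ j * mu $ j else mu $ n * mu $ j))"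
proof -
  have "EE mu (\<lambda>xs::'t\<Rightarrow>'n. (\<Sum>t\<in>UNIV. Q $ t $ k * P $ n $ xs t) * (datamat xs *v column k A) $ j)
     = EE mu (\<lambda>xs. \<Sum>t\<in>UNIV. \<Sum>s\<in>UNIV. (Q $ t $ k * A $ s $ k) * (P $ n $ xs t * (if xs s = j then 1 else 0)))"
    unfolding z_comp by (subst sum.swap) (simp add: sum_distrib_left sum_distrib_right mult_ac)
  also have "\<dots> = (\<Sum>t\<in>UNIV. \<Sum>s\<in>UNIV. (Q $ t $ k * A $ s $ k) * EE mu (\<lambda>xs. P $ n $ xs t * (if xs s = j then 1 else 0)))"
    by (simp add: EE_sum EE_cmult)
  also have "\<dots> = (\<Sum>t\<in>UNIV. \<Sum>s\<in>UNIV. Q $ t $ k * A $ s $ k * (if t = s then P $ n $ j * mu $ j else mu $ n * mu $ j))"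
  proof -
    have pe: "EE mu (\<lambda>xs::'t\<Rightarrow>'n. P $ n $ xs t * (if xs s = j then 1 else 0)) =
      (if t = s then P $ n $ j * mu $ j else mu $ n * mu $ j)" for t s
      using EE_pair[OF mu_sum, of "\<lambda>i. P $ n $ i" t "\<lambda>i. if i = j then 1 else 0" s]
      by (simp add: ind_sum ind_sum1 mv_fix[OF P_mu] mult_ac)
    show ?thesis by (simp only: pe)
  qed
  finally show ?thesis .
qed

lemma Sq_sum:
  assumes P_col: "\<forall>j. (\<Sum>i\<in>UNIV. P $ i $ j) = (1::real)" and Q_col: "\<forall>k. (\<Sum>t\<in>UNIV. Q $ t $ k) = (1::real)"
  shows "(\<Sum>xo\<in>UNIV. \<Sum>t\<in>UNIV. Q $ t $ k * P $ xo $ xs t) = 1"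
proof -
  have "(\<Sum>xo\<in>UNIV. \<Sum>t\<in>UNIV. Q $ t $ k * P $ xo $ xs t) = (\<Sum>t\<in>UNIV. \<Sum>xo\<in>UNIV. Q $ t $ k * P $ xo $ xs t)"
    by (rule sum.swap)
  also have "\<dots> = (\<Sum>t\<in>UNIV. Q $ t $ k * (\<Sum>xo\<in>UNIV. P $ xo $ xs t))"
    by (simp add: sum_distrib_left)
  also have "\<dots> = 1" using P_col Q_col by simp
  finally show ?thesis .
qed



lemma mdiag_comp: "(M ** diagv mu) $ n $ j = M $ n $ j * mu $ j"
  by (simp add: matrix_matrix_mult_def diagv_def if_distrib if_distribR cong: if_cong)

lemma EE_swap: "(\<Sum>xs\<in>UNIV. \<Sum>k\<in>UNIV. (\<Prod>t\<in>UNIV. mu $ xs t) * mu $ k * H xs k) =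
   (\<Sum>k\<in>UNIV. mu $ k * EE mu (\<lambda>xs. H xs k))"
  unfolding EE_def by (subst sum.swap) (simp add: sum_distrib_left mult_ac)

lemma part1_entry:
  fixes mu :: "real^'n::finite"
    and P V :: "real^'n^'n"
    and Q A :: "real^'n^'t::finite"
  assumes P_col: "\<forall>j. (\<Sum>i\<in>UNIV. P $ i $ j) = 1"
    and mu_sum: "(\<Sum>i\<in>UNIV. mu $ i) = 1"
    and P_mu: "P *v mu = mu"
    and Q_col: "\<forall>k. (\<Sum>t\<in>UNIV. Q $ t $ k) = 1"
    and V_mu: "V *v mu = mu"
    and A_col: "\<forall>k. (\<Sum>t\<in>UNIV. A $ t $ k) = 1"
  shows "expect mu P Q (\<lambda>xs k xo. grad (\<lambda>W. loss W A xs k xo) V) $ n $ j =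
          (muinner mu A A *\<^sub>R (V ** diagv mu)
         + (1 - muinner mu A A) *\<^sub>R outerv mu mu
         - muinner mu Q A *\<^sub>R (P ** diagv mu)
         - (1 - muinner mu Q A) *\<^sub>R outerv mu mu) $ n $ j"
proof -
  define z where "z xs k = datamat xs *v column k A" for xs :: "'t \<Rightarrow> 'n" and k
  define Pi where "Pi xs = (\<Prod>t\<in>UNIV. mu $ xs t)" for xs :: "'t \<Rightarrow> 'n"
  define Sq where "Sq xs k xo = (\<Sum>t\<in>UNIV. Q $ t $ k * P $ xo $ xs t)" for xs :: "'t \<Rightarrow> 'n" and k xo
  have L0: "expect mu P Q (\<lambda>xs k xo. grad (\<lambda>W. loss W A xs k xo) V) $ n $ j =
    (\<Sum>xs\<in>UNIV. \<Sum>k\<in>UNIV. \<Sum>xo\<in>UNIV. (Pi xs * mu $ k * Sq xs k xo) *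
        (((V *v z xs k) $ n - (if n = xo then 1 else 0)) * (z xs k) $ j))"
    unfolding expect_def gradV z_def Pi_def Sq_def sample_prob_def
    by (simp add: outerv_def axis_def)
  have L1: "(\<Sum>xo\<in>UNIV. (Pi xs * mu $ k * Sq xs k xo) *
        (((V *v z xs k) $ n - (if n = xo then 1 else 0)) * (z xs k) $ j)) =
     Pi xs * mu $ k * ((V *v z xs k) $ n * (z xs k) $ j - Sq xs k n * (z xs k) $ j)" for xs k
  proof -
    have "(\<Sum>xo\<in>UNIV. (Pi xs * mu $ k * Sq xs k xo) *
        (((V *v z xs k) $ n - (if n = xo then 1 else 0)) * (z xs k) $ j)) =
      (\<Sum>xo\<in>UNIV. Pi xs * mu $ k * ((V *v z xs k) $ n * (z xs k) $ j) * Sq xs k xo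
         - (if n = xo then Pi xs * mu $ k * Sq xs k xo * (z xs k) $ j else 0))"
      by (intro sum.cong refl) (auto simp: algebra_simps)
    also have "\<dots> = Pi xs * mu $ k * ((V *v z xs k) $ n * (z xs k) $ j) * (\<Sum>xo\<in>UNIV. Sq xs k xo)
         - Pi xs * mu $ k * Sq xs k n * (z xs k) $ j"
      by (simp add: sum_subtractf sum_distrib_left)
    also have "(\<Sum>xo\<in>UNIV. Sq xs k xo) = 1"
      unfolding Sq_def by (rule Sq_sum[OF P_col Q_col])
    finally show ?thesis by (simp add: algebra_simps)
  qed
  have L2: "expect mu P Q (\<lambda>xs k xo. grad (\<lambda>W. loss W A xs k xo) V) $ n $ j =
     (\<Sum>k\<in>UNIV. mu $ k * (EE mu (\<lambda>xs. (V *v z xs k) $ n * (z xs k) $ j)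
                       - EE mu (\<lambda>xs. Sq xs k n * (z xs k) $ j)))"
    unfolding L0 by (simp only: L1) (simp only: Pi_def EE_swap EE_diff)
  define X where "X = V $ n $ j * mu $ j"
  define Y where "Y = mu $ n * mu $ j"
  define Z where "Z = P $ n $ j * mu $ j"
  define a where "a k = (\<Sum>t\<in>UNIV. A $ t $ k * A $ t $ k)" for k
  define b where "b k = (\<Sum>t\<in>UNIV. Q $ t $ k * A $ t $ k)" for k
  have T1: "EE mu (\<lambda>xs. (V *v z xs k) $ n * (z xs k) $ j) = a k * X + (1 - a k) * Y" for k
    unfolding z_def Texp1[OF mu_sum V_mu] diag_split[of "\<lambda>t. A $ t $ k" "\<lambda>s. A $ s $ k"]
    using A_col by (simp add: a_def X_def Y_def)
  have T2: "EE mu (\<lambda>xs. Sq xs k n * (z xs k) $ j) = b k * Z + (1 - b k) * Y" for k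
    unfolding z_def Sq_def Texp2[OF mu_sum P_mu] diag_split[of "\<lambda>t. Q $ t $ k" "\<lambda>s. A $ s $ k"]
    using A_col Q_col by (simp add: b_def Z_def Y_def)
  have "expect mu P Q (\<lambda>xs k xo. grad (\<lambda>W. loss W A xs k xo) V) $ n $ j =
     (\<Sum>k\<in>UNIV. (mu $ k * a k) * (X - Y) + (mu $ k * b k) * (Y - Z))"
    unfolding L2 T1 T2 by (intro sum.cong refl) (simp add: algebra_simps)
  also have "\<dots> = (\<Sum>k\<in>UNIV. mu $ k * a k) * (X - Y) + (\<Sum>k\<in>UNIV. mu $ k * b k) * (Y - Z)"
    by (simp add: sum.distrib sum_distrib_right)
  also have "(\<Sum>k\<in>UNIV. mu $ k * a k) = muinner mu A A"
    unfolding muinner_eq a_def sum_distrib_left by (subst sum.swap) (simp add: mult_ac)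
  also have "(\<Sum>k\<in>UNIV. mu $ k * b k) = muinner mu Q A"
    unfolding muinner_eq b_def sum_distrib_left by (subst sum.swap) (simp add: mult_ac)
  finally show ?thesis
    by (simp add: mdiag_comp outerv_def X_def Y_def Z_def algebra_simps)
qed



lemma part2_comp:
  fixes mu :: "real^'n::finite"
    and P V :: "real^'n^'n"
    and Q A :: "real^'n^'t::finite"
  assumes P_col: "\<forall>j. (\<Sum>i\<in>UNIV. P $ i $ j) = 1"
    and mu_sum: "(\<Sum>i\<in>UNIV. mu $ i) = 1"
    and P_mu: "P *v mu = mu"
    and Q_col: "\<forall>k. (\<Sum>t\<in>UNIV. Q $ t $ k) = 1"
    and V_mu: "V *v mu = mu"
    and A_col: "\<forall>k. (\<Sum>t\<in>UNIV. A $ t $ k) = 1"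
  shows "expect mu P Q (\<lambda>xs x xo. grad (\<lambda>a. loss V (setcol k a A) xs x xo) (column k A)) $ t0 =
           ((mu $ k * (muinner mu V V - (norm mu)^2)) *\<^sub>R column k A
         + (mu $ k * (norm mu)^2) *\<^sub>R (\<chi> t. 1)
         - (mu $ k * muinner mu V P) *\<^sub>R column k Q
         - (mu $ k * (norm mu)^2) *\<^sub>R ((\<chi> t. 1) - column k Q)) $ t0"
proof -
  define z where "z xs = datamat xs *v column k A" for xs :: "'t \<Rightarrow> 'n"
  define Pi where "Pi xs = (\<Prod>t\<in>UNIV. mu $ xs t)" for xs :: "'t \<Rightarrow> 'n"
  define Sq where "Sq xs xo = (\<Sum>t\<in>UNIV. Q $ t $ k * P $ xo $ xs t)" for xs :: "'t \<Rightarrow> 'n" and xo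
  define W where "W xs = (\<Sum>n\<in>UNIV. V $ n $ xs t0 * (V *v z xs) $ n)" for xs :: "'t \<Rightarrow> 'n"
  have G: "grad (\<lambda>a. loss V (setcol k a A) xs x xo) (column k A) $ t0 =
      (if x = k then W xs - V $ xo $ xs t0 else 0)" for xs x xo
  proof -
    have that: "(\<Sum>n\<in>UNIV. V $ n $ xs t0 * ((V *v z xs) $ n - (if n = xo then 1 else 0))) = W xs - V $ xo $ xs t0"
    proof -
      have "(\<Sum>n\<in>UNIV. V $ n $ xs t0 * ((V *v z xs) $ n - (if n = xo then 1 else 0))) =
        (\<Sum>n\<in>UNIV. V $ n $ xs t0 * (V *v z xs) $ n - (if n = xo then V $ n $ xs t0 else 0))"
        by (intro sum.cong refl) (auto simp: algebra_simps)
      then show ?thesis unfolding W_def by (simp add: sum_subtractf)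
    qed
    have tc: "(transpose V *v r) $ i = (\<Sum>n\<in>UNIV. V $ n $ i * r $ n)" for r :: "real^'n" and i
        by (simp add: matrix_vector_mult_def transpose_def)
    show ?thesis
    proof (cases "x = k")
      case True
      show ?thesis unfolding gradA using that True
        by (simp only: simp_thms if_True datamatT_mv tc vector_minus_component axis_def vec_lambda_beta z_def[symmetric])
    qed (simp add: gradA)
  qed
  have L0: "expect mu P Q (\<lambda>xs x xo. grad (\<lambda>a. loss V (setcol k a A) xs x xo) (column k A)) $ t0 =
     (\<Sum>xs\<in>UNIV. \<Sum>xo\<in>UNIV. (Pi xs * mu $ k * Sq xs xo) * (W xs - V $ xo $ xs t0))"
  proof -
    have "expect mu P Q (\<lambda>xs x xo. grad (\<lambda>a. loss V (setcol k a A) xs x xo) (column k A)) $ t0 =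
      (\<Sum>xs\<in>UNIV. \<Sum>x\<in>UNIV. \<Sum>xo\<in>UNIV. if x = k then sample_prob mu P Q xs k xo * (W xs - V $ xo $ xs t0) else 0)"
      unfolding expect_def by (simp add: G if_distrib if_distribR cong: if_cong)
    also have "\<dots> = (\<Sum>xs\<in>UNIV. \<Sum>xo\<in>UNIV. sample_prob mu P Q xs k xo * (W xs - V $ xo $ xs t0))"
      by (rule sum.cong[OF refl]) (subst sum.swap, simp)
    finally show ?thesis unfolding sample_prob_def Pi_def Sq_def .
  qed
  have L1: "(\<Sum>xo\<in>UNIV. (Pi xs * mu $ k * Sq xs xo) * (W xs - V $ xo $ xs t0)) =
     Pi xs * mu $ k * (W xs - (\<Sum>xo\<in>UNIV. \<Sum>t\<in>UNIV. Q $ t $ k * (V $ xo $ xs t0 * P $ xo $ xs t)))" for xs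
  proof -
    have "(\<Sum>xo\<in>UNIV. (Pi xs * mu $ k * Sq xs xo) * (W xs - V $ xo $ xs t0)) =
       Pi xs * mu $ k * W xs * (\<Sum>xo\<in>UNIV. Sq xs xo) - Pi xs * mu $ k * (\<Sum>xo\<in>UNIV. Sq xs xo * V $ xo $ xs t0)"
      by (simp add: sum_subtractf sum_distrib_left algebra_simps)
    also have "(\<Sum>xo\<in>UNIV. Sq xs xo) = 1"
      unfolding Sq_def by (rule Sq_sum[OF P_col Q_col])
    also have "(\<Sum>xo\<in>UNIV. Sq xs xo * V $ xo $ xs t0) = (\<Sum>xo\<in>UNIV. \<Sum>t\<in>UNIV. Q $ t $ k * (V $ xo $ xs t0 * P $ xo $ xs t))"
      unfolding Sq_def by (simp add: sum_distrib_left sum_distrib_right mult_ac)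
    finally show ?thesis by (simp add: algebra_simps)
  qed
  have L2: "expect mu P Q (\<lambda>xs x xo. grad (\<lambda>a. loss V (setcol k a A) xs x xo) (column k A)) $ t0 =
     mu $ k * (EE mu W - EE mu (\<lambda>xs. \<Sum>xo\<in>UNIV. \<Sum>t\<in>UNIV. Q $ t $ k * (V $ xo $ xs t0 * P $ xo $ xs t)))"
    unfolding L0 L1 EE_diff[symmetric] unfolding EE_def Pi_def by (simp add: sum_distrib_left mult_ac)
  define vv where "vv = (\<Sum>n\<in>UNIV. \<Sum>i\<in>UNIV. mu $ i * (V $ n $ i * V $ n $ i))"
  define vp where "vp = (\<Sum>n\<in>UNIV. \<Sum>i\<in>UNIV. mu $ i * (V $ n $ i * P $ n $ i))"
  define mm where "mm = (\<Sum>n\<in>UNIV. mu $ n * mu $ n)"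
  have E1: "EE mu W = A $ t0 $ k * vv + (1 - A $ t0 $ k) * mm"
  proof -
    have "EE mu W = EE mu (\<lambda>xs. \<Sum>n\<in>UNIV. \<Sum>s\<in>UNIV. A $ s $ k * (V $ n $ xs t0 * V $ n $ xs s))"
      unfolding W_def z_def Vz_comp by (simp add: sum_distrib_left mult_ac)
    also have "\<dots> = (\<Sum>n\<in>UNIV. \<Sum>s\<in>UNIV. A $ s $ k * EE mu (\<lambda>xs. V $ n $ xs t0 * V $ n $ xs s))"
      by (simp add: EE_sum EE_cmult)
    also have "\<dots> = (\<Sum>n\<in>UNIV. \<Sum>s\<in>UNIV. A $ s $ k * (if t0 = s then (\<Sum>i\<in>UNIV. mu $ i * (V $ n $ i * V $ n $ i)) else mu $ n * mu $ n))"
    proof -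
      have pe: "EE mu (\<lambda>xs::'t\<Rightarrow>'n. V $ n $ xs t0 * V $ n $ xs s) =
        (if t0 = s then (\<Sum>i\<in>UNIV. mu $ i * (V $ n $ i * V $ n $ i)) else mu $ n * mu $ n)" for n s
        using EE_pair[OF mu_sum, of "\<lambda>i. V $ n $ i" t0 "\<lambda>i. V $ n $ i" s]
        by (simp add: mv_fix[OF V_mu])
      show ?thesis by (simp only: pe)
    qed
    also have "\<dots> = (\<Sum>s\<in>UNIV. \<Sum>n\<in>UNIV. A $ s $ k * (if t0 = s then (\<Sum>i\<in>UNIV. mu $ i * (V $ n $ i * V $ n $ i)) else mu $ n * mu $ n))"
      by (rule sum.swap)
    also have "\<dots> = (\<Sum>s\<in>UNIV. A $ s $ k * (if t0 = s then vv else mm))"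
      unfolding vv_def mm_def by (intro sum.cong refl) (simp add: sum_distrib_left)
    also have "\<dots> = A $ t0 $ k * vv + (1 - A $ t0 $ k) * mm"
      using A_col by (simp add: single_split)
    finally show ?thesis .
  qed
  have E2: "EE mu (\<lambda>xs. \<Sum>xo\<in>UNIV. \<Sum>t\<in>UNIV. Q $ t $ k * (V $ xo $ xs t0 * P $ xo $ xs t)) =
      Q $ t0 $ k * vp + (1 - Q $ t0 $ k) * mm"
  proof -
    have "EE mu (\<lambda>xs. \<Sum>xo\<in>UNIV. \<Sum>t\<in>UNIV. Q $ t $ k * (V $ xo $ xs t0 * P $ xo $ xs t)) =
      (\<Sum>xo\<in>UNIV. \<Sum>t\<in>UNIV. Q $ t $ k * EE mu (\<lambda>xs. V $ xo $ xs t0 * P $ xo $ xs t))"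
      by (simp add: EE_sum EE_cmult)
    also have "\<dots> = (\<Sum>xo\<in>UNIV. \<Sum>t\<in>UNIV. Q $ t $ k * (if t0 = t then (\<Sum>i\<in>UNIV. mu $ i * (V $ xo $ i * P $ xo $ i)) else mu $ xo * mu $ xo))"
    proof -
      have pe: "EE mu (\<lambda>xs::'t\<Rightarrow>'n. V $ xo $ xs t0 * P $ xo $ xs t) =
        (if t0 = t then (\<Sum>i\<in>UNIV. mu $ i * (V $ xo $ i * P $ xo $ i)) else mu $ xo * mu $ xo)" for xo t
        using EE_pair[OF mu_sum, of "\<lambda>i. V $ xo $ i" t0 "\<lambda>i. P $ xo $ i" t]
        by (simp add: mv_fix[OF V_mu] mv_fix[OF P_mu])
      show ?thesis by (simp only: pe)
    qed
    also have "\<dots> = (\<Sum>t\<in>UNIV. \<Sum>xo\<in>UNIV. Q $ t $ k * (if t0 = t then (\<Sum>i\<in>UNIV. mu $ i * (V $ xo $ i * P $ xo $ i)) else mu $ xo * mu $ xo))"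
      by (rule sum.swap)
    also have "\<dots> = (\<Sum>t\<in>UNIV. Q $ t $ k * (if t0 = t then vp else mm))"
      unfolding vp_def mm_def by (intro sum.cong refl) (simp add: sum_distrib_left)
    also have "\<dots> = Q $ t0 $ k * vp + (1 - Q $ t0 $ k) * mm"
      using Q_col by (simp add: single_split)
    finally show ?thesis .
  qed
  have vvm: "muinner mu V V = vv" unfolding muinner_eq vv_def by (simp add: mult_ac)
  have vpm: "muinner mu V P = vp" unfolding muinner_eq vp_def by (simp add: mult_ac)
  have mmn: "(norm mu)^2 = mm" unfolding power2_norm_eq_inner inner_vec_def mm_def by simp
  show ?thesis
    unfolding L2 E1 E2 vvm vpm mmn by (simp add: column_def algebra_simps)
qed

theorem lemmaB7:
  fixes mu :: "real^'n::finite"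
    and P V :: "real^'n^'n"
    and Q A :: "real^'n^'t::finite"
  assumes P_nonneg: "\<forall>i j. P $ i $ j \<ge> 0"
    and P_col: "\<forall>j. (\<Sum>i\<in>UNIV. P $ i $ j) = 1"
    and mu_nonneg: "\<forall>i. mu $ i \<ge> 0"
    and mu_sum: "(\<Sum>i\<in>UNIV. mu $ i) = 1"
    and P_mu: "P *v mu = mu"
    and Q_nonneg: "\<forall>t k. Q $ t $ k \<ge> 0"
    and Q_col: "\<forall>k. (\<Sum>t\<in>UNIV. Q $ t $ k) = 1"
    and V_mu: "V *v mu = mu"
    and A_col: "\<forall>k. (\<Sum>t\<in>UNIV. A $ t $ k) = 1"
  shows "expect mu P Q (\<lambda>xs k xo. grad (\<lambda>W. loss W A xs k xo) V) =
           muinner mu A A *\<^sub>R (V ** diagv mu)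
         + (1 - muinner mu A A) *\<^sub>R outerv mu mu
         - muinner mu Q A *\<^sub>R (P ** diagv mu)
         - (1 - muinner mu Q A) *\<^sub>R outerv mu mu
       \<and> (\<forall>k. expect mu P Q (\<lambda>xs x xo. grad (\<lambda>a. loss V (setcol k a A) xs x xo) (column k A)) =
           (mu $ k * (muinner mu V V - (norm mu)^2)) *\<^sub>R column k A
         + (mu $ k * (norm mu)^2) *\<^sub>R (\<chi> t. 1)
         - (mu $ k * muinner mu V P) *\<^sub>R column k Q
         - (mu $ k * (norm mu)^2) *\<^sub>R ((\<chi> t. 1) - column k Q))"
  proof (intro conjI allI)
  show "expect mu P Q (\<lambda>xs k xo. grad (\<lambda>W. loss W A xs k xo) V) =
           muinner mu A A *\<^sub>R (V ** diagv mu)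
         + (1 - muinner mu A A) *\<^sub>R outerv mu mu
         - muinner mu Q A *\<^sub>R (P ** diagv mu)
         - (1 - muinner mu Q A) *\<^sub>R outerv mu mu"
    unfolding vec_eq_iff using part1_entry[OF P_col mu_sum P_mu Q_col V_mu A_col] by blast
next
  fix k
  show "expect mu P Q (\<lambda>xs x xo. grad (\<lambda>a. loss V (setcol k a A) xs x xo) (column k A)) =
           (mu $ k * (muinner mu V V - (norm mu)^2)) *\<^sub>R column k A
         + (mu $ k * (norm mu)^2) *\<^sub>R (\<chi> t. 1)
         - (mu $ k * muinner mu V P) *\<^sub>R column k Q
         - (mu $ k * (norm mu)^2) *\<^sub>R ((\<chi> t. 1) - column k Q)"
    unfolding vec_eq_iff using part2_comp[OF P_col mu_sum P_mu Q_col V_mu A_col] by blast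
qed

end
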